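(* Let $X$ be a continuum, let $n\geq 2$ be an integer, and let $f:X\to X$ be a map. Then $F_n(f)$ is $\mathbb{Z}$-transitive if and only if $f$ is weakly mixing.
   Context: A continuum is a nonempty compact connected metric space. $F_n(X)$ is the set of nonempty subsets of $X$ with at most $n$ points, with the Hausdorff metric topology, and $F_n(f)(A)=f(A)$. A map $g:Z\to Z$ is $\mathbb{Z}$-transitive if for any nonempty open $U,V\subseteq Z$ there is $k\in\mathbb{Z}$ with $g^k(U)\cap V\neq\emptyset$, where for $k<0$, $g^k(U)$ means $(g^{-k})^{-1}(U)$. $f$ is weakly mixing if for any nonempty open $U_1,U_2,V_1,V_2\subseteq X$ there is $k\in\mathbb{N}$ with $f^k(U_1)\cap V_1\neq\emptyset$ and $f^k(U_2)\cap V_2\neq\emptyset$. *)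

theory Defs
  imports "HOL-Analysis.Analysis"
begin

definition continuum :: "'a::metric_space set \<Rightarrow> bool" where
  "continuum X \<longleftrightarrow> X \<noteq> {} \<and> compact X \<and> connected X"

definition Fn :: "nat \<Rightarrow> 'a set \<Rightarrow> 'a set set" where
  "Fn n X = {A. A \<subseteq> X \<and> A \<noteq> {} \<and> finite A \<and> card A \<le> n}"

text \<open>Hausdorff distance (used on nonempty finite sets).\<close>
definition hausdorff_dist :: "'a::metric_space set \<Rightarrow> 'a set \<Rightarrow> real" where
  "hausdorff_dist A B = max (SUP a\<in>A. infdist a B) (SUP b\<in>B. infdist b A)"

definition Fn_open :: "nat \<Rightarrow> 'a::metric_space set \<Rightarrow> 'a set set \<Rightarrow> bool" where
  "Fn_open n X \<U> \<longleftrightarrow> \<U> \<subseteq> Fn n X \<and>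
     (\<forall>A\<in>\<U>. \<exists>e>0. \<forall>B\<in>Fn n X. hausdorff_dist A B < e \<longrightarrow> B \<in> \<U>)"

definition Fn_map :: "('a \<Rightarrow> 'a) \<Rightarrow> 'a set \<Rightarrow> 'a set" where
  "Fn_map f A = f ` A"

text \<open>Z-transitivity of g on a space Z given by its family of open sets.
  For k < 0, g^k(U) is the preimage (within Z) of U under g^(-k).\<close>
definition Z_transitive :: "('b set \<Rightarrow> bool) \<Rightarrow> 'b set \<Rightarrow> ('b \<Rightarrow> 'b) \<Rightarrow> bool" where
  "Z_transitive isopen Z g \<longleftrightarrow>
     (\<forall>U V. isopen U \<and> U \<noteq> {} \<and> isopen V \<and> V \<noteq> {} \<longrightarrow>
        (\<exists>k::int. (if k \<ge> 0 then (g ^^ nat k) ` U \<inter> V \<noteq> {}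
                   else {z\<in>Z. (g ^^ nat (-k)) z \<in> U} \<inter> V \<noteq> {})))"

definition weakly_mixing :: "'a::topological_space set \<Rightarrow> ('a \<Rightarrow> 'a) \<Rightarrow> bool" where
  "weakly_mixing X f \<longleftrightarrow>
     (\<forall>U1 U2 V1 V2. openin (top_of_set X) U1 \<and> U1 \<noteq> {} \<and> openin (top_of_set X) U2 \<and> U2 \<noteq> {}
        \<and> openin (top_of_set X) V1 \<and> V1 \<noteq> {} \<and> openin (top_of_set X) V2 \<and> V2 \<noteq> {} \<longrightarrow>
        (\<exists>k::nat. k \<ge> 1 \<and> (f ^^ k) ` U1 \<inter> V1 \<noteq> {} \<and> (f ^^ k) ` U2 \<inter> V2 \<noteq> {}))"

end

theory Submission
  imports Defs
begin



lemma finite_eps: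
  assumes "finite E" "\<forall>e\<in>E. \<exists>\<epsilon>>0. P e \<epsilon>"
    and mono: "\<And>e \<epsilon> \<epsilon>'. P e \<epsilon> \<Longrightarrow> 0 < \<epsilon>' \<Longrightarrow> \<epsilon>' \<le> \<epsilon> \<Longrightarrow> P e \<epsilon>'"
  shows "\<exists>\<epsilon>::real. \<epsilon> > 0 \<and> (\<forall>e\<in>E. P e \<epsilon>)"
  using assms(1,2)
proof (induction E rule: finite_induct)
  case empty then show ?case by (intro exI[of _ 1]) auto
next
  case (insert x F)
  then obtain \<epsilon>1 where e1: "\<epsilon>1 > 0" "\<forall>e\<in>F. P e \<epsilon>1" by auto
  from insert obtain \<epsilon>2 where e2: "\<epsilon>2 > 0" "P x \<epsilon>2" by auto
  show ?case
    by (rule exI[of _ "min \<epsilon>1 \<epsilon>2"]) (use e1 e2 mono in auto)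
qed

lemma hd_upper1:
  fixes E D :: "'a::metric_space set"
  assumes "finite E" "finite D" "a \<in> E"
  shows "infdist a D \<le> hausdorff_dist E D"
proof -
  have "infdist a D \<le> (SUP a\<in>E. infdist a D)"
    by (rule cSUP_upper) (use assms in \<open>auto intro: bdd_above_finite\<close>)
  then show ?thesis unfolding hausdorff_dist_def by linarith
qed

lemma hd_upper2:
  fixes E D :: "'a::metric_space set"
  assumes "finite E" "finite D" "b \<in> D"
  shows "infdist b E \<le> hausdorff_dist E D"
proof -
  have "infdist b E \<le> (SUP b\<in>D. infdist b E)"
    by (rule cSUP_upper) (use assms in \<open>auto intro: bdd_above_finite\<close>)
  then show ?thesis unfolding hausdorff_dist_def by linarith
qed

lemma infdist_near:
  fixes D :: "'a::metric_space set"
  assumes "D \<noteq> {}" "infdist a D < r"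
  shows "\<exists>b\<in>D. dist a b < r"
proof (rule ccontr)
  assume "\<not> ?thesis"
  then have "\<forall>b\<in>D. r \<le> dist a b" by auto
  then have "r \<le> infdist a D" unfolding infdist_notempty[OF assms(1)]
    by (intro cINF_greatest) (use assms in auto)
  then show False using assms by linarith
qed

lemma hd_le:
  fixes E D :: "'a::metric_space set"
  assumes "E \<noteq> {}" "D \<noteq> {}"
    and "\<forall>a\<in>E. \<exists>b\<in>D. dist a b \<le> r" "\<forall>b\<in>D. \<exists>a\<in>E. dist b a \<le> r"
  shows "hausdorff_dist E D \<le> r"
  unfolding hausdorff_dist_def
proof (rule max.boundedI)
  show "(SUP a\<in>E. infdist a D) \<le> r"
    by (rule cSUP_least) (use assms in \<open>auto intro: infdist_le2\<close>)
  show "(SUP b\<in>D. infdist b E) \<le> r"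
    by (rule cSUP_least) (use assms in \<open>auto intro: infdist_le2\<close>)
qed

lemma hd_near1:
  fixes E D :: "'a::metric_space set"
  assumes "finite E" "finite D" "D \<noteq> {}" "a \<in> E" "hausdorff_dist E D < r"
  shows "\<exists>b\<in>D. dist a b < r"
  using hd_upper1[OF assms(1,2,4)] assms by (intro infdist_near) auto

lemma hd_near2:
  fixes E D :: "'a::metric_space set"
  assumes "finite E" "finite D" "E \<noteq> {}" "b \<in> D" "hausdorff_dist E D < r"
  shows "\<exists>a\<in>E. dist b a < r"
  using hd_upper2[OF assms(1,2,4)] assms by (intro infdist_near) auto

definition box1 :: "nat \<Rightarrow> 'a::metric_space set \<Rightarrow> 'a set \<Rightarrow> 'a set set" where
  "box1 n X A = {E \<in> Fn n X. E \<subseteq> A}"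

definition box2 :: "nat \<Rightarrow> 'a::metric_space set \<Rightarrow> 'a set \<Rightarrow> 'a set \<Rightarrow> 'a set set" where
  "box2 n X B C = {E \<in> Fn n X. E \<inter> B \<noteq> {} \<and> E \<inter> C \<noteq> {}}"

lemma box1_open:
  assumes "openin (top_of_set X) A"
  shows "Fn_open n X (box1 n X A)"
  unfolding Fn_open_def
proof (intro conjI ballI)
  show "box1 n X A \<subseteq> Fn n X" by (auto simp: box1_def)
  fix E assume E: "E \<in> box1 n X A"
  then have fE: "finite E" "E \<subseteq> A" "E \<noteq> {}" by (auto simp: box1_def Fn_def)
  have "\<forall>e\<in>E. \<exists>\<epsilon>>0. \<forall>x'\<in>X. dist x' e < \<epsilon> \<longrightarrow> x' \<in> A"
    using assms fE unfolding openin_euclidean_subtopology_iff by blast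
  then obtain \<epsilon> where eps: "\<epsilon> > 0" "\<forall>e\<in>E. \<forall>x'\<in>X. dist x' e < \<epsilon> \<longrightarrow> x' \<in> A"
    using finite_eps[OF fE(1), of "\<lambda>e \<epsilon>. \<forall>x'\<in>X. dist x' e < \<epsilon> \<longrightarrow> x' \<in> A"] by force
  show "\<exists>e>0. \<forall>B\<in>Fn n X. hausdorff_dist E B < e \<longrightarrow> B \<in> box1 n X A"
  proof (intro exI[of _ \<epsilon>] conjI ballI impI)
    fix B assume B: "B \<in> Fn n X" "hausdorff_dist E B < \<epsilon>"
    have "B \<subseteq> A"
    proof
      fix b assume "b \<in> B"
      then obtain a where "a \<in> E" "dist b a < \<epsilon>"
        using hd_near2[of E B b \<epsilon>] B fE by (auto simp: Fn_def)
      then show "b \<in> A" using eps \<open>b \<in> B\<close> B by (auto simp: Fn_def dist_commute)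
    qed
    then show "B \<in> box1 n X A" using B by (auto simp: box1_def)
  qed (use eps in auto)
qed

lemma box2_open:
  assumes "openin (top_of_set X) B" "openin (top_of_set X) C"
  shows "Fn_open n X (box2 n X B C)"
  unfolding Fn_open_def
proof (intro conjI ballI)
  show "box2 n X B C \<subseteq> Fn n X" by (auto simp: box2_def)
  fix E assume E: "E \<in> box2 n X B C"
  then obtain b c where bc: "b \<in> E" "b \<in> B" "c \<in> E" "c \<in> C" "finite E"
    by (auto simp: box2_def Fn_def)
  obtain e1 where e1: "e1 > 0" "\<forall>x'\<in>X. dist x' b < e1 \<longrightarrow> x' \<in> B"
    using assms(1) bc unfolding openin_euclidean_subtopology_iff by blast
  obtain e2 where e2: "e2 > 0" "\<forall>x'\<in>X. dist x' c < e2 \<longrightarrow> x' \<in> C"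
    using assms(2) bc unfolding openin_euclidean_subtopology_iff by blast
  show "\<exists>e>0. \<forall>D\<in>Fn n X. hausdorff_dist E D < e \<longrightarrow> D \<in> box2 n X B C"
  proof (intro exI[of _ "min e1 e2"] conjI ballI impI)
    fix D assume D: "D \<in> Fn n X" "hausdorff_dist E D < min e1 e2"
    have fD: "finite D" "D \<noteq> {}" using D by (auto simp: Fn_def)
    obtain b' where "b' \<in> D" "dist b b' < min e1 e2"
      using hd_near1[OF bc(5) fD bc(1) D(2)] by blast
    moreover obtain c' where "c' \<in> D" "dist c c' < min e1 e2"
      using hd_near1[OF bc(5) fD bc(3) D(2)] by blast
    ultimately have "b' \<in> D \<inter> B" "c' \<in> D \<inter> C" using D e1 e2
      by (auto simp: Fn_def dist_commute)
    then show "D \<in> box2 n X B C" using D by (auto simp: box2_def)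
  qed (use e1 e2 in auto)
qed

lemma Fn_map_pow: "(Fn_map f ^^ m) E = (f ^^ m) ` E"
  by (induction m) (auto simp: Fn_map_def image_comp)


definition hits :: "('a \<Rightarrow> 'a) \<Rightarrow> nat \<Rightarrow> 'a set \<Rightarrow> 'a set \<Rightarrow> bool" where
  "hits f m A B \<longleftrightarrow> (\<exists>x\<in>A. (f ^^ m) x \<in> B)"

definition gm :: "('a \<Rightarrow> 'a) \<Rightarrow> 'a set \<Rightarrow> 'a set \<Rightarrow> 'a set \<Rightarrow> 'a set \<Rightarrow> bool" where
  "gm f a b c d \<longleftrightarrow> (\<exists>k\<ge>1. hits f k a c \<and> hits f k b d)"

definition opn :: "'a::topological_space set \<Rightarrow> 'a set \<Rightarrow> bool" where
  "opn X A \<longleftrightarrow> openin (top_of_set X) A \<and> A \<noteq> {}"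

lemma funpow_comm: "(f ^^ m) ((f ^^ s) x) = (f ^^ s) ((f ^^ m) x)"
  by (metis add.commute comp_apply funpow_add)

lemma gm_mono:
  assumes "gm f a b c d" "a \<subseteq> a'" "b \<subseteq> b'" "c \<subseteq> c'" "d \<subseteq> d'"
  shows "gm f a' b' c' d'"
proof -
  obtain k x y where "k \<ge> 1" "x \<in> a" "(f ^^ k) x \<in> c" "y \<in> b" "(f ^^ k) y \<in> d"
    using assms(1) unfolding gm_def hits_def by blast
  then show ?thesis unfolding gm_def hits_def using assms(2-5) by blast
qed

lemma gm_swap: "gm f a b c d \<Longrightarrow> gm f b a d c"
  unfolding gm_def by blast

locale dsetup =
  fixes X :: "'a::metric_space set" and f :: "'a \<Rightarrow> 'a"
  assumes cont: "continuous_on X f" and inv: "f ` X \<subseteq> X"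
begin

lemma pow_in: "x \<in> X \<Longrightarrow> (f ^^ m) x \<in> X"
  by (induction m) (use inv in auto)

lemma pow_cont: "continuous_on X (f ^^ m)"
proof (induction m)
  case 0 then show ?case by (simp add: continuous_on_id)
next
  case (Suc m)
  have "continuous_on X (f \<circ> (f ^^ m))"
    by (rule continuous_on_compose) (use Suc cont pow_in in \<open>auto intro: continuous_on_subset\<close>)
  then show ?case by simp
qed

lemma pre_open:
  assumes "openin (top_of_set X) B"
  shows "openin (top_of_set X) {x\<in>X. (f ^^ m) x \<in> B}"
proof -
  obtain T where T: "open T" "B = X \<inter> T" using assms openin_open by blast
  have "openin (top_of_set X) (X \<inter> (f ^^ m) -` T)"
    by (rule continuous_openin_preimage_gen[OF pow_cont T(1)])
  moreover have "X \<inter> (f ^^ m) -` T = {x\<in>X. (f ^^ m) x \<in> B}"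
    using T pow_in by auto
  ultimately show ?thesis by simp
qed

lemma opn_sub: "opn X A \<Longrightarrow> A \<subseteq> X"
  unfolding opn_def by (meson openin_imp_subset)

lemma opn_pre:
  assumes "opn X A" "opn X B" "x \<in> A" "(f ^^ m) x \<in> B"
  shows "opn X (A \<inter> {x\<in>X. (f ^^ m) x \<in> B})"
proof -
  have "openin (top_of_set X) {x\<in>X. (f ^^ m) x \<in> B}"
    using assms(2) pre_open unfolding opn_def by blast
  then have "openin (top_of_set X) (A \<inter> {x\<in>X. (f ^^ m) x \<in> B})"
    using assms(1) unfolding opn_def by (intro openin_Int) auto
  moreover have "x \<in> A \<inter> {x\<in>X. (f ^^ m) x \<in> B}"
    using assms opn_sub by auto
  ultimately show ?thesis unfolding opn_def by blast
qed


lemma transpose: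
  assumes tr: "\<And>U V. opn X U \<Longrightarrow> opn X V \<Longrightarrow> \<exists>m\<ge>1. hits f m U V"
    and o: "opn X a" "opn X b" "opn X c" "opn X d"
    and g: "gm f a b c d"
  shows "gm f a c b d"
proof -
  obtain k x y where k: "k \<ge> 1" "x \<in> a" "(f ^^ k) x \<in> c" "y \<in> b" "(f ^^ k) y \<in> d"
    using g unfolding gm_def hits_def by blast
  let ?A = "a \<inter> {x\<in>X. (f ^^ k) x \<in> c}"
  let ?B = "b \<inter> {x\<in>X. (f ^^ k) x \<in> d}"
  have "opn X ?A" using opn_pre[OF o(1) o(3) k(2,3)] .
  moreover have "opn X ?B" using opn_pre[OF o(2) o(4) k(4,5)] .
  ultimately obtain m z where m: "m \<ge> 1" "z \<in> ?A" "(f ^^ m) z \<in> ?B"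
    using tr unfolding hits_def by blast
  have "(f ^^ m) ((f ^^ k) z) \<in> d" using m(3) funpow_comm[where f=f and m=m and s=k and x=z] by auto
  then show ?thesis unfolding gm_def hits_def using m by blast
qed

end

locale zsetup = dsetup +
  assumes compX: "compact X"
    and zt: "\<And>A B C. opn X A \<Longrightarrow> opn X B \<Longrightarrow> opn X C \<Longrightarrow>
        (\<exists>m. hits f m A B \<and> hits f m A C) \<or> (\<exists>m. hits f m B A \<and> hits f m C A)"
    and noiso: "\<And>A. opn X A \<Longrightarrow> \<exists>a\<in>A. \<exists>b\<in>A. a \<noteq> b"
begin

lemma separate:
  assumes "opn X A" "opn X B"
  shows "\<exists>A' B'. opn X A' \<and> opn X B' \<and> A' \<subseteq> A \<and> B' \<subseteq> B \<and> A' \<inter> B' = {}"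
proof -
  obtain b where b: "b \<in> B" using assms unfolding opn_def by blast
  obtain a where a: "a \<in> A" "a \<noteq> b" using noiso[OF assms(1)] by metis
  define r where "r = dist a b / 2"
  have r: "r > 0" using a unfolding r_def by simp
  have ob: "openin (top_of_set X) (X \<inter> ball p r)" for p
    using openin_open by blast
  let ?A = "A \<inter> (X \<inter> ball a r)" and ?B = "B \<inter> (X \<inter> ball b r)"
  have "opn X ?A" using assms(1) ob[of a] a r opn_sub[OF assms(1)] unfolding opn_def
    by (auto intro!: openin_Int)
  moreover have "opn X ?B" using assms(2) ob[of b] b r opn_sub[OF assms(2)] unfolding opn_def
    by (auto intro!: openin_Int)
  moreover have "?A \<inter> ?B = {}"
  proof (rule ccontr)
    assume "?A \<inter> ?B \<noteq> {}"
    then obtain z where "dist a z < r" "dist b z < r" by auto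
    then have "dist a b < 2 * r" using dist_triangle3[of a b z] by (simp add: dist_commute)
    then show False unfolding r_def by simp
  qed
  ultimately show ?thesis by blast
qed

lemma surj: "f ` X = X"
proof (rule ccontr)
  assume "f ` X \<noteq> X"
  then have ne: "X - f ` X \<noteq> {}" using inv by blast
  have "closed (f ` X)"
    by (rule compact_imp_closed, rule compact_continuous_image[OF cont compX])
  then have "closedin (top_of_set X) (f ` X)" using inv by (simp add: closed_subset)
  then have "openin (top_of_set X) (X - f ` X)"
    by (intro openin_diff) auto
  then have "opn X (X - f ` X)" using ne unfolding opn_def by blast
  then obtain P Q where PQ: "opn X P" "opn X Q" "P \<subseteq> X - f ` X" "Q \<subseteq> X - f ` X" "P \<inter> Q = {}"
    using separate by metis
  have no: False if h: "hits f m S T" and st: "S \<subseteq> X" "T \<subseteq> X - f ` X" "S \<inter> T = {}" for m S T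
  proof -
    obtain x where x: "x \<in> S" "(f ^^ m) x \<in> T" using h unfolding hits_def by blast
    show False
    proof (cases m)
      case 0 then show ?thesis using x st by auto
    next
      case (Suc j)
      then have "(f ^^ m) x = f ((f ^^ j) x)" by simp
      moreover have "(f ^^ j) x \<in> X" using pow_in x that by auto
      ultimately show ?thesis using x st by auto
    qed
  qed
  obtain m where "hits f m P Q \<or> hits f m Q P" using zt[OF PQ(1) PQ(2) PQ(2)] by blast
  moreover have "P \<subseteq> X" "Q \<subseteq> X" using PQ opn_sub by auto
  ultimately show False using no[of m P Q] no[of m Q P] PQ(3,4,5) by blast
qed

lemma pow_surj: "y \<in> X \<Longrightarrow> \<exists>x\<in>X. (f ^^ m) x = y"
proof (induction m arbitrary: y)
  case 0 then show ?case by auto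
next
  case (Suc m)
  obtain z where "z \<in> X" "f z = y" using surj Suc.prems by (metis imageE)
  then obtain x where "x \<in> X" "(f ^^ m) x = z" using Suc.IH by blast
  then show ?case using \<open>f z = y\<close> by auto
qed

lemma opn_pre2:
  assumes "opn X B"
  shows "opn X {x\<in>X. (f ^^ m) x \<in> B}"
proof -
  obtain y where "y \<in> B" using assms unfolding opn_def by blast
  then obtain x where "x \<in> X" "(f ^^ m) x = y" using pow_surj opn_sub[OF assms] by blast
  then show ?thesis using pre_open assms \<open>y \<in> B\<close> unfolding opn_def by blast
qed

lemma ftrans:
  assumes "opn X U" "opn X V"
  shows "\<exists>m\<ge>1. hits f m U V"
proof (rule ccontr)
  assume nt: "\<not> ?thesis"
  define Ob where "Ob = {x\<in>X. \<exists>k\<ge>1. (f ^^ k) x \<in> V}"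
  have Oeq: "Ob = (\<Union>k\<in>{1..}. {x\<in>X. (f ^^ k) x \<in> V})" unfolding Ob_def by auto
  have "openin (top_of_set X) Ob" unfolding Oeq
    by (rule openin_Union) (use pre_open assms(2) in \<open>auto simp: opn_def\<close>)
  moreover have "Ob \<noteq> {}"
  proof -
    obtain v where "v \<in> V" using assms(2) unfolding opn_def by blast
    then obtain x where "x \<in> X" "(f ^^ 1) x = v" using pow_surj opn_sub[OF assms(2)] by blast
    then have "x \<in> Ob" unfolding Ob_def using \<open>v \<in> V\<close> by blast
    then show ?thesis by blast
  qed
  ultimately have oO: "opn X Ob" unfolding opn_def by blast
  have key: "(f ^^ k) x \<notin> Ob" if "x \<in> U" for k x
  proof
    assume "(f ^^ k) x \<in> Ob"
    then obtain j where j: "j \<ge> 1" "(f ^^ j) ((f ^^ k) x) \<in> V" unfolding Ob_def by blast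
    then have "(f ^^ (j + k)) x \<in> V" by (simp add: funpow_add)
    then have "hits f (j + k) U V" using that unfolding hits_def by blast
    moreover have "j + k \<ge> 1" using j(1) by simp
    ultimately show False using nt by blast
  qed
  have "\<not> hits f s U Ob" for s using key unfolding hits_def by blast
  then obtain s where s: "hits f s Ob U" using zt[OF oO assms(1) assms(1)] by blast
  then obtain x0 where x0: "x0 \<in> Ob" "(f ^^ s) x0 \<in> U" unfolding hits_def by blast
  let ?A = "Ob \<inter> {x\<in>X. (f ^^ s) x \<in> U}"
  let ?C = "{x\<in>X. (f ^^ s) x \<in> Ob}"
  have oA: "opn X ?A" using opn_pre[OF oO assms(1) x0] .
  have oC: "opn X ?C" using opn_pre2[OF oO] .
  have c1: "\<not> hits f m ?A ?C" for m
  proof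
    assume "hits f m ?A ?C"
    then obtain a where a: "a \<in> ?A" "(f ^^ s) ((f ^^ m) a) \<in> Ob" unfolding hits_def by blast
    then have "(f ^^ m) ((f ^^ s) a) \<in> Ob" using funpow_comm[where f=f and m=m and s=s and x=a] by simp
    then show False using key a by blast
  qed
  have c2: "\<not> hits f m U ?A" for m using key unfolding hits_def by blast
  show False using zt[OF oA assms(1) oC] c1 c2 by blast
qed

lemma W:
  assumes o: "opn X U1" "opn X U2" "opn X V1" "opn X V2" and disj: "U1 \<inter> V1 = {}"
  shows "gm f U1 U2 V1 V2 \<or> gm f V1 V2 U1 U2"
proof -
  obtain s x0 where s: "x0 \<in> U1" "(f ^^ s) x0 \<in> U2" using ftrans[OF o(1,2)] unfolding hits_def by blast
  let ?A = "U1 \<inter> {x\<in>X. (f ^^ s) x \<in> U2}"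
  let ?C = "{x\<in>X. (f ^^ s) x \<in> V2}"
  have oA: "opn X ?A" using opn_pre[OF o(1,2) s] .
  have oC: "opn X ?C" using opn_pre2[OF o(4)] .
  show ?thesis
  proof (cases "\<exists>m. hits f m ?A V1 \<and> hits f m ?A ?C")
    case True
    then obtain m a a' where m: "a \<in> ?A" "(f ^^ m) a \<in> V1" "a' \<in> ?A" "(f ^^ m) a' \<in> ?C"
      unfolding hits_def by blast
    have "m \<noteq> 0" using m disj by auto
    moreover have "(f ^^ m) ((f ^^ s) a') \<in> V2" using m(4) funpow_comm[where f=f and m=m and s=s and x=a'] by simp
    ultimately have "gm f U1 U2 V1 V2" unfolding gm_def hits_def using m by (intro exI[of _ m]) auto
    then show ?thesis by blast
  next
    case False
    then obtain m b c where m: "b \<in> V1" "(f ^^ m) b \<in> ?A" "c \<in> ?C" "(f ^^ m) c \<in> ?A"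
      using zt[OF oA o(3) oC] unfolding hits_def by blast
    have "m \<noteq> 0" using m disj by auto
    moreover have "(f ^^ m) ((f ^^ s) c) \<in> U2" using m(4) funpow_comm[where f=f and m=m and s=s and x=c] by simp
    moreover have "(f ^^ s) c \<in> V2" using m(3) by simp
    ultimately have "gm f V1 V2 U1 U2" unfolding gm_def hits_def using m by (intro exI[of _ m]) auto
    then show ?thesis by blast
  qed
qed

lemma wm_all:
  assumes o: "opn X U1" "opn X U2" "opn X V1" "opn X V2"
  shows "gm f U1 U2 V1 V2"
proof -
  obtain A B where AB: "opn X A" "opn X B" "A \<subseteq> U1" "B \<subseteq> V1" "A \<inter> B = {}"
    using separate[OF o(1) o(3)] by blast
  have T: "gm f a c b d" if "opn X a" "opn X b" "opn X c" "opn X d" "gm f a b c d" for a b c d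
    using transpose[OF ftrans that] .
  have "gm f A U2 B V2"
  proof -
    have "gm f A U2 B V2 \<or> gm f B V2 A U2" using W[OF AB(1) o(2) AB(2) o(4) AB(5)] .
    moreover have "gm f A U2 B V2" if "gm f B V2 A U2"
    proof -
      have "gm f B A V2 U2" using T[OF AB(2) o(4) AB(1) o(2) that] .
      then have "gm f A B U2 V2" by (rule gm_swap)
      then show ?thesis using T[OF AB(1) AB(2) o(2) o(4)] by blast
    qed
    ultimately show ?thesis by blast
  qed
  then show ?thesis using gm_mono AB by blast
qed

end


context dsetup
begin

lemma multi:
  assumes wm: "weakly_mixing X f" and ne: "X \<noteq> {}" and fin: "finite I"
    and o: "\<forall>i\<in>I. opn X (U i) \<and> opn X (V i)"
  shows "\<exists>A B. opn X A \<and> opn X B \<and> (\<forall>m. hits f m A B \<longrightarrow> (\<forall>i\<in>I. hits f m (U i) (V i)))"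
  using fin o
proof (induction I rule: finite_induct)
  case empty
  have "opn X X" using ne unfolding opn_def by simp
  then show ?case by (intro exI[of _ X]) simp
next
  case (insert j I)
  have "\<forall>i\<in>I. opn X (U i) \<and> opn X (V i)" using insert.prems by blast
  then obtain A B where AB: "opn X A" "opn X B" "\<forall>m. hits f m A B \<longrightarrow> (\<forall>i\<in>I. hits f m (U i) (V i))"
    using insert.IH by blast
  have oj: "opn X (U j)" "opn X (V j)" using insert.prems by auto
  have "\<exists>k::nat. k \<ge> 1 \<and> (f ^^ k) ` U j \<inter> A \<noteq> {} \<and> (f ^^ k) ` V j \<inter> B \<noteq> {}"
    using wm[unfolded weakly_mixing_def, rule_format, of "U j" "V j" A B] oj AB(1,2)
    unfolding opn_def by blast
  then obtain k where k: "(f ^^ k) ` U j \<inter> A \<noteq> {}" "(f ^^ k) ` V j \<inter> B \<noteq> {}" by blast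
  then obtain x y where xy: "x \<in> U j" "(f ^^ k) x \<in> A" "y \<in> V j" "(f ^^ k) y \<in> B"
    by blast
  let ?A = "U j \<inter> {x\<in>X. (f ^^ k) x \<in> A}"
  let ?B = "V j \<inter> {x\<in>X. (f ^^ k) x \<in> B}"
  have "opn X ?A" using opn_pre[OF oj(1) AB(1) xy(1,2)] .
  moreover have "opn X ?B" using opn_pre[OF oj(2) AB(2) xy(3,4)] .
  moreover have "\<forall>i\<in>insert j I. hits f m (U i) (V i)" if h: "hits f m ?A ?B" for m
  proof -
    obtain z where z: "z \<in> ?A" "(f ^^ m) z \<in> ?B" using h unfolding hits_def by blast
    have "(f ^^ m) ((f ^^ k) z) \<in> B" using z(2) funpow_comm[where f=f and m=m and s=k and x=z] by simp
    then have "hits f m A B" unfolding hits_def using z(1) by blast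
    then have "\<forall>i\<in>I. hits f m (U i) (V i)" using AB(3) by blast
    moreover have "hits f m (U j) (V j)" unfolding hits_def using z by blast
    ultimately show ?thesis by blast
  qed
  ultimately show ?case by blast
qed

end

lemma pairing_le:
  assumes "finite E" "finite D" "E \<noteq> {}" "card E \<le> card D"
  shows "\<exists>I. I \<subseteq> E \<times> D \<and> fst ` I = E \<and> snd ` I = D \<and> card I \<le> card D \<and> finite I"
proof -
  obtain \<iota> where \<iota>: "\<iota> ` E \<subseteq> D" "inj_on \<iota> E" using card_le_inj[OF assms(1,2,4)] by blast
  obtain e0 where e0: "e0 \<in> E" using assms(3) by blast
  define \<phi> where "\<phi> d = (if d \<in> \<iota> ` E then inv_into E \<iota> d else e0)" for d
  define I where "I = (\<lambda>d. (\<phi> d, d)) ` D"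
  have phiE: "\<phi> d \<in> E" for d unfolding \<phi>_def using e0 by (auto intro: inv_into_into)
  have "fst ` I = E"
  proof
    show "fst ` I \<subseteq> E" unfolding I_def using phiE by auto
    show "E \<subseteq> fst ` I"
    proof
      fix e assume "e \<in> E"
      then have "\<phi> (\<iota> e) = e" unfolding \<phi>_def using \<iota>(2) by (auto simp: inv_into_f_f)
      moreover have "\<iota> e \<in> D" using \<iota>(1) \<open>e \<in> E\<close> by auto
      ultimately show "e \<in> fst ` I" unfolding I_def by (metis (no_types, lifting) fst_conv image_eqI)
    qed
  qed
  moreover have "snd ` I = D" unfolding I_def by (auto simp: image_image)
  moreover have "card I \<le> card D" unfolding I_def by (rule card_image_le[OF assms(2)])
  moreover have "I \<subseteq> E \<times> D" unfolding I_def using phiE by auto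
  moreover have "finite I" unfolding I_def using assms(2) by simp
  ultimately show ?thesis by blast
qed

lemma pairing:
  assumes "finite E" "finite D" "E \<noteq> {}" "D \<noteq> {}"
  shows "\<exists>I. I \<subseteq> E \<times> D \<and> fst ` I = E \<and> snd ` I = D \<and> card I \<le> max (card E) (card D) \<and> finite I"
proof (cases "card E \<le> card D")
  case True
  obtain I where "I \<subseteq> E \<times> D" "fst ` I = E" "snd ` I = D" "card I \<le> card D" "finite I"
    using pairing_le[OF assms(1,2,3) True] by blast
  then show ?thesis by (intro exI[of _ I]) auto
next
  case False
  then obtain J where J: "J \<subseteq> D \<times> E" "fst ` J = D" "snd ` J = E" "card J \<le> card E" "finite J"
    using pairing_le[OF assms(2,1,4)] by fastforce
  let ?I = "prod.swap ` J"
  have "?I \<subseteq> E \<times> D" using J by auto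
  moreover have "fst ` ?I = E" using J(3) by (simp add: image_image)
  moreover have "snd ` ?I = D" using J(2) by (simp add: image_image)
  moreover have "card ?I \<le> card E" using card_image_le[OF J(5), of prod.swap] J(4) by linarith
  moreover have "finite ?I" using J(5) by simp
  ultimately show ?thesis by (intro exI[of _ ?I]) auto
qed

lemma wm_imp_Z:
  fixes X :: "'a::metric_space set"
  assumes cont: "continuous_on X f" and inv: "f ` X \<subseteq> X" and ne: "X \<noteq> {}"
    and wm: "weakly_mixing X f"
  shows "Z_transitive (Fn_open n X) (Fn n X) (Fn_map f)"
  unfolding Z_transitive_def
proof (intro allI impI)
  interpret dsetup X f using cont inv by unfold_locales
  fix \<U> \<V> assume UV: "Fn_open n X \<U> \<and> \<U> \<noteq> {} \<and> Fn_open n X \<V> \<and> \<V> \<noteq> {}"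
  obtain E where E: "E \<in> \<U>" using UV by blast
  obtain D where D: "D \<in> \<V>" using UV by blast
  obtain e1 where e1: "e1 > 0" "\<forall>B\<in>Fn n X. hausdorff_dist E B < e1 \<longrightarrow> B \<in> \<U>"
    using UV E unfolding Fn_open_def by blast
  obtain e2 where e2: "e2 > 0" "\<forall>B\<in>Fn n X. hausdorff_dist D B < e2 \<longrightarrow> B \<in> \<V>"
    using UV D unfolding Fn_open_def by blast
  have EF: "E \<subseteq> X" "E \<noteq> {}" "finite E" "card E \<le> n" using E UV unfolding Fn_open_def Fn_def by auto
  have DF: "D \<subseteq> X" "D \<noteq> {}" "finite D" "card D \<le> n" using D UV unfolding Fn_open_def Fn_def by auto
  define r where "r = min e1 e2 / 2"
  have r: "r > 0" "r < e1" "r < e2" using e1 e2 unfolding r_def by auto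
  obtain I where I: "I \<subseteq> E \<times> D" "fst ` I = E" "snd ` I = D" "card I \<le> max (card E) (card D)" "finite I"
    using pairing[OF EF(3) DF(3) EF(2) DF(2)] by blast
  have cI: "card I \<le> n" using I(4) EF(4) DF(4) by linarith
  define U where "U i = X \<inter> ball (fst i) r" for i :: "'a \<times> 'a"
  define V where "V i = X \<inter> ball (snd i) r" for i :: "'a \<times> 'a"
  have oUV: "\<forall>i\<in>I. opn X (U i) \<and> opn X (V i)"
  proof
    fix i assume "i \<in> I"
    then have "i \<in> E \<times> D" using I(1) by blast
    then have "fst i \<in> X" "snd i \<in> X" using EF(1) DF(1) by (auto simp: mem_Times_iff)
    then show "opn X (U i) \<and> opn X (V i)" unfolding opn_def U_def V_def
      using r(1) by (auto simp: openin_open_Int)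
  qed
  obtain A B where AB: "opn X A" "opn X B" "\<forall>m. hits f m A B \<longrightarrow> (\<forall>i\<in>I. hits f m (U i) (V i))"
    using multi[OF wm ne I(5) oUV] by blast
  have "\<exists>k::nat. k \<ge> 1 \<and> (f ^^ k) ` A \<inter> B \<noteq> {} \<and> (f ^^ k) ` A \<inter> B \<noteq> {}"
    using wm[unfolded weakly_mixing_def, rule_format, of A A B B] AB(1,2) unfolding opn_def by blast
  then obtain k where "(f ^^ k) ` A \<inter> B \<noteq> {}" by blast
  then have "hits f k A B" unfolding hits_def by blast
  then have hk: "\<forall>i\<in>I. hits f k (U i) (V i)" using AB(3) by blast
  define x where "x i = (SOME y. y \<in> U i \<and> (f ^^ k) y \<in> V i)" for i
  have x: "x i \<in> U i \<and> (f ^^ k) (x i) \<in> V i" if iI: "i \<in> I" for i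
  proof -
    have "hits f k (U i) (V i)" using hk iI by blast
    then have "\<exists>y. y \<in> U i \<and> (f ^^ k) y \<in> V i" unfolding hits_def by blast
    then show ?thesis unfolding x_def by (rule someI_ex)
  qed
  define E' where "E' = x ` I"
  define D' where "D' = (f ^^ k) ` E'"
  have Ine: "I \<noteq> {}" using I(2) EF(2) by auto
  have E'X: "E' \<subseteq> X"
  proof
    fix y assume "y \<in> E'"
    then obtain i where "i \<in> I" "y = x i" unfolding E'_def by blast
    then show "y \<in> X" using x[of i] unfolding U_def by blast
  qed
  have E'ne: "E' \<noteq> {}" unfolding E'_def using Ine by blast
  have E'fin: "finite E'" unfolding E'_def using I(5) by simp
  have E'c: "card E' \<le> n" unfolding E'_def using card_image_le[OF I(5), of x] cI by linarith
  have E'F: "E' \<in> Fn n X" unfolding Fn_def using E'X E'ne E'fin E'c by blast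
  have D'X: "D' \<subseteq> X" unfolding D'_def using E'X pow_in by blast
  have D'ne: "D' \<noteq> {}" unfolding D'_def using E'ne by blast
  have D'fin: "finite D'" unfolding D'_def using E'fin by simp
  have D'c: "card D' \<le> n" unfolding D'_def using card_image_le[OF E'fin, of "f ^^ k"] E'c by linarith
  have D'F: "D' \<in> Fn n X" unfolding Fn_def using D'X D'ne D'fin D'c by blast
  have "hausdorff_dist E E' \<le> r"
  proof (rule hd_le)
    show "E \<noteq> {}" "E' \<noteq> {}" using EF(2) Ine unfolding E'_def by auto
    show "\<forall>a\<in>E. \<exists>b\<in>E'. dist a b \<le> r"
    proof
      fix a assume "a \<in> E"
      then obtain i where "i \<in> I" "fst i = a" using I(2) by force
      then have "x i \<in> E'" "dist a (x i) < r" using x[of i] unfolding E'_def U_def by auto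
      then show "\<exists>b\<in>E'. dist a b \<le> r" by (meson less_imp_le)
    qed
    show "\<forall>b\<in>E'. \<exists>a\<in>E. dist b a \<le> r"
    proof
      fix b assume "b \<in> E'"
      then obtain i where "i \<in> I" "b = x i" unfolding E'_def by blast
      moreover have "fst i \<in> E" using I(2) \<open>i \<in> I\<close> by blast
      moreover have "dist (fst i) (x i) < r" using x[OF \<open>i \<in> I\<close>] unfolding U_def by auto
      ultimately show "\<exists>a\<in>E. dist b a \<le> r" by (metis dist_commute less_imp_le)
    qed
  qed
  then have "E' \<in> \<U>" using e1 E'F r by auto
  have "hausdorff_dist D D' \<le> r"
  proof (rule hd_le)
    show "D \<noteq> {}" "D' \<noteq> {}" using DF(2) Ine unfolding D'_def E'_def by auto
    show "\<forall>a\<in>D. \<exists>b\<in>D'. dist a b \<le> r"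
    proof
      fix a assume "a \<in> D"
      then obtain i where "i \<in> I" "snd i = a" using I(3) by force
      then have "(f ^^ k) (x i) \<in> D'" "dist a ((f ^^ k) (x i)) < r" using x[of i] unfolding D'_def E'_def V_def by auto
      then show "\<exists>b\<in>D'. dist a b \<le> r" by (meson less_imp_le)
    qed
    show "\<forall>b\<in>D'. \<exists>a\<in>D. dist b a \<le> r"
    proof
      fix b assume "b \<in> D'"
      then obtain i where "i \<in> I" "b = (f ^^ k) (x i)" unfolding D'_def E'_def by blast
      moreover have "snd i \<in> D" using I(3) \<open>i \<in> I\<close> by blast
      moreover have "dist (snd i) ((f ^^ k) (x i)) < r" using x[OF \<open>i \<in> I\<close>] unfolding V_def by auto
      ultimately show "\<exists>a\<in>D. dist b a \<le> r" by (metis dist_commute less_imp_le)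
    qed
  qed
  then have "D' \<in> \<V>" using e2 D'F r by auto
  have "(Fn_map f ^^ nat (int k)) ` \<U> \<inter> \<V> \<noteq> {}"
    using \<open>E' \<in> \<U>\<close> \<open>D' \<in> \<V>\<close> unfolding Fn_map_pow D'_def by auto
  then show "\<exists>k::int. (if k \<ge> 0 then (Fn_map f ^^ nat k) ` \<U> \<inter> \<V> \<noteq> {}
                   else {z\<in>Fn n X. (Fn_map f ^^ nat (-k)) z \<in> \<U>} \<inter> \<V> \<noteq> {})"
    by (intro exI[of _ "int k"]) simp
qed


lemma opn_subset: "opn X A \<Longrightarrow> A \<subseteq> X"
  unfolding opn_def by (meson openin_imp_subset)

lemma noiso_lemma:
  fixes X :: "'a::metric_space set"
  assumes "continuum X" "\<not> (\<exists>x0. X = {x0})" "opn X A"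
  shows "\<exists>a\<in>A. \<exists>b\<in>A. a \<noteq> b"
proof (rule ccontr)
  assume "\<not> ?thesis"
  moreover obtain a where a: "a \<in> A" using assms(3) unfolding opn_def by blast
  ultimately have A: "A = {a}" by blast
  have "openin (top_of_set X) {a}" using assms(3) A unfolding opn_def by simp
  moreover have "a \<in> X" using opn_subset[OF assms(3)] a by blast
  then have "closedin (top_of_set X) {a}" by (simp add: closed_subset)
  moreover have "connected X" using assms(1) unfolding continuum_def by blast
  ultimately have "{a} = X" unfolding connected_clopen by blast
  then show False using assms(2) by blast
qed

lemma Z_imp_zt:
  fixes X :: "'a::metric_space set"
  assumes Z: "Z_transitive (Fn_open n X) (Fn n X) (Fn_map f)" and n: "n \<ge> 2"
    and o: "opn X A" "opn X B" "opn X C"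
  shows "(\<exists>m. hits f m A B \<and> hits f m A C) \<or> (\<exists>m. hits f m B A \<and> hits f m C A)"
proof -
  obtain a where a: "a \<in> A" using o(1) unfolding opn_def by blast
  obtain b where b: "b \<in> B" using o(2) unfolding opn_def by blast
  obtain c where c: "c \<in> C" using o(3) unfolding opn_def by blast
  have X: "a \<in> X" "b \<in> X" "c \<in> X" using a b c opn_subset o by blast+
  have "{a} \<in> box1 n X A" using a X n unfolding box1_def Fn_def by auto
  then have ne1: "box1 n X A \<noteq> {}" by blast
  have "card {b, c} \<le> 2" by (simp add: card_insert_if)
  then have "{b, c} \<in> box2 n X B C" using b c X n unfolding box2_def Fn_def by auto
  then have ne2: "box2 n X B C \<noteq> {}" by blast
  have op1: "Fn_open n X (box1 n X A)" using box1_open o(1) unfolding opn_def by blast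
  have op2: "Fn_open n X (box2 n X B C)" using box2_open o(2,3) unfolding opn_def by blast
  obtain k :: int where k: "if k \<ge> 0 then (Fn_map f ^^ nat k) ` (box1 n X A) \<inter> (box2 n X B C) \<noteq> {}
                   else {z\<in>Fn n X. (Fn_map f ^^ nat (-k)) z \<in> box1 n X A} \<inter> box2 n X B C \<noteq> {}"
    using Z op1 op2 ne1 ne2 unfolding Z_transitive_def by blast
  show ?thesis
  proof (cases "k \<ge> 0")
    case True
    then obtain E where E: "E \<in> box1 n X A" "(f ^^ nat k) ` E \<in> box2 n X B C"
      using k by (auto simp: Fn_map_pow)
    then have "E \<subseteq> A" unfolding box1_def by blast
    moreover have "(f ^^ nat k) ` E \<inter> B \<noteq> {}" "(f ^^ nat k) ` E \<inter> C \<noteq> {}"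
      using E(2) unfolding box2_def by blast+
    ultimately have "hits f (nat k) A B \<and> hits f (nat k) A C" unfolding hits_def by blast
    then show ?thesis by blast
  next
    case False
    then obtain E where E: "(f ^^ nat (-k)) ` E \<in> box1 n X A" "E \<in> box2 n X B C"
      using k by (auto simp: Fn_map_pow)
    then have "(f ^^ nat (-k)) ` E \<subseteq> A" unfolding box1_def by blast
    moreover have "E \<inter> B \<noteq> {}" "E \<inter> C \<noteq> {}"
      using E(2) unfolding box2_def by blast+
    ultimately have "hits f (nat (-k)) B A \<and> hits f (nat (-k)) C A" unfolding hits_def by blast
    then show ?thesis by blast
  qed
qed

theorem theorem5:
  fixes X :: "'a::metric_space set" and f :: "'a \<Rightarrow> 'a" and n :: nat
  assumes "continuum X" and "n \<ge> 2"
    and "continuous_on X f" and "f ` X \<subseteq> X"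
  shows "Z_transitive (Fn_open n X) (Fn n X) (Fn_map f) \<longleftrightarrow> weakly_mixing X f"
proof
  assume Z: "Z_transitive (Fn_open n X) (Fn n X) (Fn_map f)"
  show "weakly_mixing X f"
  proof (cases "\<exists>x0. X = {x0}")
    case True
    then obtain x0 where x0: "X = {x0}" by blast
    then have fx: "f x0 = x0" using assms(4) by auto
    have "(f ^^ 1) x0 = x0" using fx by simp
    show ?thesis unfolding weakly_mixing_def
    proof (intro allI impI)
      fix U1 U2 V1 V2 :: "'a set"
      assume h: "openin (top_of_set X) U1 \<and> U1 \<noteq> {} \<and> openin (top_of_set X) U2 \<and> U2 \<noteq> {} \<and>
        openin (top_of_set X) V1 \<and> V1 \<noteq> {} \<and> openin (top_of_set X) V2 \<and> V2 \<noteq> {}"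
      then have "U1 = {x0}" "U2 = {x0}" "V1 = {x0}" "V2 = {x0}"
        using x0 openin_imp_subset by (metis subset_singletonD)+
      then show "\<exists>k::nat. k \<ge> 1 \<and> (f ^^ k) ` U1 \<inter> V1 \<noteq> {} \<and> (f ^^ k) ` U2 \<inter> V2 \<noteq> {}"
        using fx by (intro exI[of _ 1]) simp
    qed
  next
    case False
    interpret zsetup X f
    proof unfold_locales
      show "continuous_on X f" "f ` X \<subseteq> X" using assms(3,4) by auto
      show "compact X" using assms(1) unfolding continuum_def by blast
      show "(\<exists>m. hits f m A B \<and> hits f m A C) \<or> (\<exists>m. hits f m B A \<and> hits f m C A)"
        if "opn X A" "opn X B" "opn X C" for A B C
        using Z_imp_zt[OF Z assms(2) that] .
      show "\<exists>a\<in>A. \<exists>b\<in>A. a \<noteq> b" if "opn X A" for A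
        using noiso_lemma[OF assms(1) False that] .
    qed
    show ?thesis unfolding weakly_mixing_def
    proof (intro allI impI)
      fix U1 U2 V1 V2 :: "'a set"
      assume h: "openin (top_of_set X) U1 \<and> U1 \<noteq> {} \<and> openin (top_of_set X) U2 \<and> U2 \<noteq> {} \<and>
        openin (top_of_set X) V1 \<and> V1 \<noteq> {} \<and> openin (top_of_set X) V2 \<and> V2 \<noteq> {}"
      then have "gm f U1 U2 V1 V2" using wm_all unfolding opn_def by blast
      then obtain k where "k \<ge> 1" "hits f k U1 V1" "hits f k U2 V2" unfolding gm_def by blast
      then show "\<exists>k::nat. k \<ge> 1 \<and> (f ^^ k) ` U1 \<inter> V1 \<noteq> {} \<and> (f ^^ k) ` U2 \<inter> V2 \<noteq> {}"
        unfolding hits_def by blast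
    qed
  qed
next
  assume "weakly_mixing X f"
  moreover have "X \<noteq> {}" using assms(1) unfolding continuum_def by blast
  ultimately show "Z_transitive (Fn_open n X) (Fn n X) (Fn_map f)"
    using wm_imp_Z assms(3,4) by blast
qed

end
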